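(* Let $q_0\in\mathbb{R}$ with $q_0<-\frac{\pi^2}{4}$, and consider the Dirichlet problem $$-y''+q_0\,y=\lambda\, w(x)\,y,\quad -1\le x\le 1,\qquad y(-1)=y(1)=0,$$ where $w(x)=1$ for $x\ge 0$ and $w(x)=-1$ for $x<0$. Then the Richardson number $\lambda^-$ of this problem satisfies $\lambda^-\ge -|q_0|+\frac{\pi^2}{4}$. Equivalently: for every real eigenvalue $\lambda<-|q_0|+\frac{\pi^2}{4}$ of this problem and every corresponding nontrivial eigenfunction $u$, one has $\int_{-1}^1 w(x)|u(x)|^2\,dx<0$.
   Context: Solutions are understood as $C^1$ functions on $[-1,1]$ with absolutely continuous derivative satisfying the equation almost everywhere. For a regular Dirichlet problem $y''+(\lambda w+q)y=0$ on $[a,b]$, $y(a)=y(b)=0$, with real piecewise continuous $w,q$, the Richardson numbers are $$\lambda^+=\inf\Big\{\rho\in\mathbb{R}:\ \text{for every real eigenvalue }\lambda>\rho\text{ and every eigenfunction }u\text{ for }\lambda,\ \int_a^b w|u|^2\,dx>0\Big\},$$ $$\lambda^-=\sup\Big\{\rho\in\mathbb{R}:\ \text{for every real eigenvalue }\lambda<\rho\text{ and every eigenfunction }u\text{ for }\lambda,\ \int_a^b w|u|^2\,dx<0\Big\}.$$ *)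

theory Defs
  imports "HOL-Analysis.Analysis"
begin

definition abs_cont_on :: "real \<Rightarrow> real \<Rightarrow> (real \<Rightarrow> 'a::real_normed_vector) \<Rightarrow> bool" where
  "abs_cont_on a b f \<longleftrightarrow>
     (\<forall>e>0. \<exists>d>0. \<forall>(n::nat) (I :: nat \<Rightarrow> real \<times> real).
        (\<forall>i<n. a \<le> fst (I i) \<and> fst (I i) \<le> snd (I i) \<and> snd (I i) \<le> b) \<and>
        (\<forall>i<n. \<forall>j<n. i \<noteq> j \<longrightarrow> snd (I i) \<le> fst (I j) \<or> snd (I j) \<le> fst (I i)) \<and>
        (\<Sum>i<n. snd (I i) - fst (I i)) < d
        \<longrightarrow> (\<Sum>i<n. norm (f (snd (I i)) - f (fst (I i)))) < e)"

definition is_solution ::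
  "real \<Rightarrow> real \<Rightarrow> (real \<Rightarrow> real) \<Rightarrow> (real \<Rightarrow> real) \<Rightarrow> real \<Rightarrow> (real \<Rightarrow> complex) \<Rightarrow> bool" where
  "is_solution a b w q lam y \<longleftrightarrow>
     (\<exists>y'. (\<forall>x\<in>{a..b}. (y has_vector_derivative y' x) (at x within {a..b})) \<and>
           continuous_on {a..b} y' \<and>
           abs_cont_on a b y' \<and>
           (AE x in lborel. x \<in> {a<..<b} \<longrightarrow>
              (y' has_vector_derivative (- complex_of_real (lam * w x + q x) * y x)) (at x)))"

definition is_eigenfunction ::
  "real \<Rightarrow> real \<Rightarrow> (real \<Rightarrow> real) \<Rightarrow> (real \<Rightarrow> real) \<Rightarrow> real \<Rightarrow> (real \<Rightarrow> complex) \<Rightarrow> bool" where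
  "is_eigenfunction a b w q lam u \<longleftrightarrow>
     is_solution a b w q lam u \<and> u a = 0 \<and> u b = 0 \<and> (\<exists>x\<in>{a..b}. u x \<noteq> 0)"

definition is_eigenvalue ::
  "real \<Rightarrow> real \<Rightarrow> (real \<Rightarrow> real) \<Rightarrow> (real \<Rightarrow> real) \<Rightarrow> real \<Rightarrow> bool" where
  "is_eigenvalue a b w q lam \<longleftrightarrow> (\<exists>u. is_eigenfunction a b w q lam u)"

text \<open>Richardson number lambda^-, as a supremum in the extended reals
  (so that an empty or unbounded set is handled without junk values).\<close>
definition richardson_minus ::
  "real \<Rightarrow> real \<Rightarrow> (real \<Rightarrow> real) \<Rightarrow> (real \<Rightarrow> real) \<Rightarrow> ereal" where
  "richardson_minus a b w q = Sup (ereal ` {\<rho>::real.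
      \<forall>lam u. is_eigenvalue a b w q lam \<and> lam < \<rho> \<and> is_eigenfunction a b w q lam u
        \<longrightarrow> integral {a..b} (\<lambda>x. w x * (cmod (u x))\<^sup>2) < 0})"

end

theory Submission
  imports Defs
begin


lemma abs_cont_on_mono:
  assumes "abs_cont_on a b f" "a \<le> c" "d \<le> b"
  shows "abs_cont_on c d f"
  unfolding abs_cont_on_def
proof (intro allI impI)
  fix e :: real assume "e > 0"
  then obtain dl where "dl > 0" and H: "\<forall>(n::nat) (I :: nat \<Rightarrow> real \<times> real).
        (\<forall>i<n. a \<le> fst (I i) \<and> fst (I i) \<le> snd (I i) \<and> snd (I i) \<le> b) \<and>
        (\<forall>i<n. \<forall>j<n. i \<noteq> j \<longrightarrow> snd (I i) \<le> fst (I j) \<or> snd (I j) \<le> fst (I i)) \<and>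
        (\<Sum>i<n. snd (I i) - fst (I i)) < dl
        \<longrightarrow> (\<Sum>i<n. norm (f (snd (I i)) - f (fst (I i)))) < e"
    using assms(1) unfolding abs_cont_on_def by blast
  show "\<exists>dl>0. \<forall>(n::nat) (I :: nat \<Rightarrow> real \<times> real).
        (\<forall>i<n. c \<le> fst (I i) \<and> fst (I i) \<le> snd (I i) \<and> snd (I i) \<le> d) \<and>
        (\<forall>i<n. \<forall>j<n. i \<noteq> j \<longrightarrow> snd (I i) \<le> fst (I j) \<or> snd (I j) \<le> fst (I i)) \<and>
        (\<Sum>i<n. snd (I i) - fst (I i)) < dl
        \<longrightarrow> (\<Sum>i<n. norm (f (snd (I i)) - f (fst (I i)))) < e"
  proof (intro exI[of _ dl] conjI allI impI)
    fix n :: nat and I :: "nat \<Rightarrow> real \<times> real"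
    assume A: "(\<forall>i<n. c \<le> fst (I i) \<and> fst (I i) \<le> snd (I i) \<and> snd (I i) \<le> d) \<and>
        (\<forall>i<n. \<forall>j<n. i \<noteq> j \<longrightarrow> snd (I i) \<le> fst (I j) \<or> snd (I j) \<le> fst (I i)) \<and>
        (\<Sum>i<n. snd (I i) - fst (I i)) < dl"
    then have "(\<forall>i<n. a \<le> fst (I i) \<and> fst (I i) \<le> snd (I i) \<and> snd (I i) \<le> b)"
      using assms by force
    with A H show "(\<Sum>i<n. norm (f (snd (I i)) - f (fst (I i)))) < e" by blast
  qed (fact)
qed

lemma abs_cont_on_diff:
  fixes f g :: "real \<Rightarrow> 'a::real_normed_vector"
  assumes "abs_cont_on a b f" "abs_cont_on a b g"
  shows "abs_cont_on a b (\<lambda>x. f x - g x)"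
  unfolding abs_cont_on_def
proof (intro allI impI)
  fix e :: real assume "e > 0"
  then have e2: "e/2 > 0" by simp
  obtain d1 where "d1 > 0" and H1: "\<forall>(n::nat) (I :: nat \<Rightarrow> real \<times> real).
        (\<forall>i<n. a \<le> fst (I i) \<and> fst (I i) \<le> snd (I i) \<and> snd (I i) \<le> b) \<and>
        (\<forall>i<n. \<forall>j<n. i \<noteq> j \<longrightarrow> snd (I i) \<le> fst (I j) \<or> snd (I j) \<le> fst (I i)) \<and>
        (\<Sum>i<n. snd (I i) - fst (I i)) < d1
        \<longrightarrow> (\<Sum>i<n. norm (f (snd (I i)) - f (fst (I i)))) < e/2"
    using assms(1) e2 unfolding abs_cont_on_def by blast
  obtain d2 where "d2 > 0" and H2: "\<forall>(n::nat) (I :: nat \<Rightarrow> real \<times> real).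
        (\<forall>i<n. a \<le> fst (I i) \<and> fst (I i) \<le> snd (I i) \<and> snd (I i) \<le> b) \<and>
        (\<forall>i<n. \<forall>j<n. i \<noteq> j \<longrightarrow> snd (I i) \<le> fst (I j) \<or> snd (I j) \<le> fst (I i)) \<and>
        (\<Sum>i<n. snd (I i) - fst (I i)) < d2
        \<longrightarrow> (\<Sum>i<n. norm (g (snd (I i)) - g (fst (I i)))) < e/2"
    using assms(2) e2 unfolding abs_cont_on_def by blast
  show "\<exists>d>0. \<forall>(n::nat) (I :: nat \<Rightarrow> real \<times> real).
        (\<forall>i<n. a \<le> fst (I i) \<and> fst (I i) \<le> snd (I i) \<and> snd (I i) \<le> b) \<and>
        (\<forall>i<n. \<forall>j<n. i \<noteq> j \<longrightarrow> snd (I i) \<le> fst (I j) \<or> snd (I j) \<le> fst (I i)) \<and>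
        (\<Sum>i<n. snd (I i) - fst (I i)) < d
        \<longrightarrow> (\<Sum>i<n. norm ((f (snd (I i)) - g (snd (I i))) - (f (fst (I i)) - g (fst (I i))))) < e"
  proof (intro exI[of _ "min d1 d2"] conjI allI impI)
    fix n :: nat and I :: "nat \<Rightarrow> real \<times> real"
    assume A: "(\<forall>i<n. a \<le> fst (I i) \<and> fst (I i) \<le> snd (I i) \<and> snd (I i) \<le> b) \<and>
        (\<forall>i<n. \<forall>j<n. i \<noteq> j \<longrightarrow> snd (I i) \<le> fst (I j) \<or> snd (I j) \<le> fst (I i)) \<and>
        (\<Sum>i<n. snd (I i) - fst (I i)) < min d1 d2"
    then have s1: "(\<Sum>i<n. norm (f (snd (I i)) - f (fst (I i)))) < e/2"
      and s2: "(\<Sum>i<n. norm (g (snd (I i)) - g (fst (I i)))) < e/2"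
      using H1 H2 by auto
    have "(\<Sum>i<n. norm ((f (snd (I i)) - g (snd (I i))) - (f (fst (I i)) - g (fst (I i)))))
       \<le> (\<Sum>i<n. norm (f (snd (I i)) - f (fst (I i))) + norm (g (snd (I i)) - g (fst (I i))))"
    proof (intro sum_mono)
      fix i
      have eq: "(f (snd (I i)) - g (snd (I i))) - (f (fst (I i)) - g (fst (I i)))
          = (f (snd (I i)) - f (fst (I i))) - (g (snd (I i)) - g (fst (I i)))"
        by (simp add: algebra_simps)
      show "norm ((f (snd (I i)) - g (snd (I i))) - (f (fst (I i)) - g (fst (I i))))
       \<le> norm (f (snd (I i)) - f (fst (I i))) + norm (g (snd (I i)) - g (fst (I i)))"
        unfolding eq by (rule norm_triangle_ineq4)
    qed
    also have "\<dots> < e" using s1 s2 by (simp add: sum.distrib)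
    finally show "(\<Sum>i<n. norm ((f (snd (I i)) - g (snd (I i))) - (f (fst (I i)) - g (fst (I i))))) < e" .
  qed (use \<open>d1 > 0\<close> \<open>d2 > 0\<close> in auto)
qed

lemma abs_cont_on_lipschitz:
  fixes f :: "real \<Rightarrow> 'a::real_normed_vector"
  assumes L: "\<And>x y. a \<le> x \<Longrightarrow> x \<le> y \<Longrightarrow> y \<le> b \<Longrightarrow> norm (f y - f x) \<le> L * (y - x)" and "L \<ge> 0"
  shows "abs_cont_on a b f"
  unfolding abs_cont_on_def
proof (intro allI impI)
  fix e :: real assume "e > 0"
  show "\<exists>d>0. \<forall>(n::nat) (I :: nat \<Rightarrow> real \<times> real).
        (\<forall>i<n. a \<le> fst (I i) \<and> fst (I i) \<le> snd (I i) \<and> snd (I i) \<le> b) \<and>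
        (\<forall>i<n. \<forall>j<n. i \<noteq> j \<longrightarrow> snd (I i) \<le> fst (I j) \<or> snd (I j) \<le> fst (I i)) \<and>
        (\<Sum>i<n. snd (I i) - fst (I i)) < d
        \<longrightarrow> (\<Sum>i<n. norm (f (snd (I i)) - f (fst (I i)))) < e"
  proof (intro exI[of _ "e / (L + 1)"] conjI allI impI)
    show "e / (L + 1) > 0" using \<open>e > 0\<close> \<open>L \<ge> 0\<close> by simp
    fix n :: nat and I :: "nat \<Rightarrow> real \<times> real"
    assume A: "(\<forall>i<n. a \<le> fst (I i) \<and> fst (I i) \<le> snd (I i) \<and> snd (I i) \<le> b) \<and>
        (\<forall>i<n. \<forall>j<n. i \<noteq> j \<longrightarrow> snd (I i) \<le> fst (I j) \<or> snd (I j) \<le> fst (I i)) \<and>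
        (\<Sum>i<n. snd (I i) - fst (I i)) < e / (L + 1)"
    have "(\<Sum>i<n. norm (f (snd (I i)) - f (fst (I i)))) \<le> (\<Sum>i<n. L * (snd (I i) - fst (I i)))"
      using A by (intro sum_mono L) auto
    also have "\<dots> = L * (\<Sum>i<n. snd (I i) - fst (I i))" by (simp add: sum_distrib_left)
    also have "\<dots> \<le> (L + 1) * (\<Sum>i<n. snd (I i) - fst (I i))"
      using A by (intro mult_right_mono sum_nonneg) auto
    also have "\<dots> < (L+1) * (e / (L + 1))"
      using A \<open>L \<ge> 0\<close> by (intro mult_strict_left_mono) auto
    also have "\<dots> = e" proof -
      have "L + 1 \<noteq> 0" using \<open>L \<ge> 0\<close> by linarith
      then show ?thesis by simp
    qed
    finally show "(\<Sum>i<n. norm (f (snd (I i)) - f (fst (I i)))) < e" .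
  qed
qed



lemma ac_zero_deriv:
  fixes h :: "real \<Rightarrow> 'a::real_normed_vector"
  assumes cd: "c \<le> d" and ac: "abs_cont_on c d h" and N: "N \<in> null_sets lborel"
    and der: "\<And>x. x \<in> {c<..<d} \<Longrightarrow> x \<notin> N \<Longrightarrow> (h has_vector_derivative 0) (at x)"
  shows "h d = h c"
proof -
  have main: "norm (h d - h c) \<le> e * (d - c) + e" if e: "e > 0" for e
  proof -
    obtain \<delta> where \<delta>: "\<delta> > 0" and ac\<delta>: "\<forall>(n::nat) (I :: nat \<Rightarrow> real \<times> real).
        (\<forall>i<n. c \<le> fst (I i) \<and> fst (I i) \<le> snd (I i) \<and> snd (I i) \<le> d) \<and>
        (\<forall>i<n. \<forall>j<n. i \<noteq> j \<longrightarrow> snd (I i) \<le> fst (I j) \<or> snd (I j) \<le> fst (I i)) \<and>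
        (\<Sum>i<n. snd (I i) - fst (I i)) < \<delta>
        \<longrightarrow> (\<Sum>i<n. norm (h (snd (I i)) - h (fst (I i)))) < e"
      using ac e unfolding abs_cont_on_def by blast
    define B where "B = N \<union> {c,d}"
    have Bnull: "B \<in> null_sets lborel"
      unfolding B_def using N finite_imp_null_set_lborel[of "{c,d}"] by (intro null_sets.Un) auto
    then have Bb: "B \<in> sets borel" by (auto simp: null_sets_def)
    obtain U where U: "open U" "B \<subseteq> U" "emeasure lborel (U - B) < \<delta>"
      using outer_regular_lborel[OF Bb \<delta>] by blast
    have UB: "emeasure lborel U < \<delta>"
    proof -
      have "U = (U - B) \<union> B" using U(2) by blast
      then have "emeasure lborel U = emeasure lborel ((U - B) \<union> B)" by simp
      also have "\<dots> = emeasure lborel (U - B)"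
        using Bnull U(1) Bb by (intro emeasure_Un_null_set) auto
      finally show ?thesis using U(3) by simp
    qed
    have ex_r: "\<forall>x. \<exists>r>0. (x \<in> B \<longrightarrow> ball x r \<subseteq> U) \<and>
       (x \<notin> B \<and> x \<in> {c..d} \<longrightarrow> (\<forall>y. \<bar>y - x\<bar> < r \<longrightarrow> norm (h y - h x) \<le> e * \<bar>y - x\<bar>))"
    proof
      fix x
      show "\<exists>r>0. (x \<in> B \<longrightarrow> ball x r \<subseteq> U) \<and>
       (x \<notin> B \<and> x \<in> {c..d} \<longrightarrow> (\<forall>y. \<bar>y - x\<bar> < r \<longrightarrow> norm (h y - h x) \<le> e * \<bar>y - x\<bar>))"
      proof (cases "x \<in> B")
        case True
        then obtain r where "r > 0" "ball x r \<subseteq> U" using U open_contains_ball by blast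
        then show ?thesis using True by blast
      next
        case False
        show ?thesis
        proof (cases "x \<in> {c..d}")
          case True
          with False have "x \<in> {c<..<d}" "x \<notin> N" unfolding B_def by auto
          then have "(h has_derivative (\<lambda>y. y *\<^sub>R 0)) (at x)"
            using der unfolding has_vector_derivative_def by blast
          then obtain r where "r > 0" and r: "\<forall>y. norm (y - x) < r \<longrightarrow>
              norm (h y - h x - (y - x) *\<^sub>R 0) \<le> e * norm (y - x)"
            using e unfolding has_derivative_at_alt by blast
          then show ?thesis using False by (intro exI[of _ r]) auto
        next
          case False2: False
          then show ?thesis using False by (intro exI[of _ 1]) auto
        qed
      qed
    qed
    then obtain r where r: "\<forall>x. r x > 0 \<and> (x \<in> B \<longrightarrow> ball x (r x) \<subseteq> U) \<and>
       (x \<notin> B \<and> x \<in> {c..d} \<longrightarrow> (\<forall>y. \<bar>y - x\<bar> < r x \<longrightarrow> norm (h y - h x) \<le> e * \<bar>y - x\<bar>))"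
      by metis
    have gauge: "gauge (\<lambda>x. ball x (r x))" using r by (intro gauge_ball_dependent) auto
    obtain p where p: "p tagged_division_of {c..d}" and fine: "(\<lambda>x. ball x (r x)) fine p"
      using fine_division_exists_real[OF gauge] by blast
    note pD = tagged_division_ofD[OF p]
    have Kform: "K = {Inf K..Sup K} \<and> Inf K \<le> x \<and> x \<le> Sup K \<and> c \<le> Inf K \<and> Sup K \<le> d
       \<and> K \<subseteq> ball x (r x)" if xK: "(x,K) \<in> p" for x K
    proof -
      obtain a b where K: "K = cbox a b" using pD(4)[OF xK] by blast
      have "x \<in> K" using pD(2)[OF xK] .
      hence ab: "a \<le> b" and "a \<le> x" "x \<le> b" using K by auto
      have "K \<subseteq> {c..d}" using pD(3)[OF xK] .
      hence "c \<le> a" "b \<le> d" using K ab by auto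
      moreover have "Inf K = a" "Sup K = b" using K ab by auto
      moreover have "K \<subseteq> ball x (r x)" using fine xK unfolding fine_def by blast
      ultimately show ?thesis using K \<open>a \<le> x\<close> \<open>x \<le> b\<close> by auto
    qed
    define F where "F = (\<lambda>xK::real \<times> real set. h (Sup (snd xK)) - h (Inf (snd xK)))"
    have sum_eq: "sum F p = h d - h c"
      using additive_tagged_division_1[OF cd p, of h] unfolding F_def by (simp add: split_beta)
    define pg where "pg = {xK\<in>p. fst xK \<notin> B}"
    define pb where "pb = {xK\<in>p. fst xK \<in> B \<and> Inf (snd xK) < Sup (snd xK)}"
    define pz where "pz = {xK\<in>p. fst xK \<in> B \<and> \<not> Inf (snd xK) < Sup (snd xK)}"
    have finp: "finite p" using pD(1) .
    have psplit: "p = pg \<union> pb \<union> pz" unfolding pg_def pb_def pz_def by auto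
    have fins: "finite pg" "finite pb" "finite pz" using finp unfolding pg_def pb_def pz_def by auto
    have "norm (h d - h c) \<le> (\<Sum>xK\<in>p. norm (F xK))"
      unfolding sum_eq[symmetric] by (rule norm_sum)
    also have "\<dots> = (\<Sum>xK\<in>pg. norm (F xK)) + (\<Sum>xK\<in>pb. norm (F xK)) + (\<Sum>xK\<in>pz. norm (F xK))"
      unfolding psplit using fins
      by (subst sum.union_disjoint, simp_all, unfold pg_def pb_def pz_def, auto)+
    also have "(\<Sum>xK\<in>pz. norm (F xK)) = 0"
    proof (intro sum.neutral ballI)
      fix xK assume "xK \<in> pz"
      then obtain x K where xK: "xK = (x,K)" "(x,K) \<in> p" "\<not> Inf K < Sup K" unfolding pz_def by (cases xK) auto
      then have "Inf K = Sup K" using Kform[OF xK(2)] by auto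
      then show "norm (F xK) = 0" unfolding F_def xK by simp
    qed
    also have "(\<Sum>xK\<in>pg. norm (F xK)) \<le> e * (d - c)"
    proof -
      have "(\<Sum>xK\<in>pg. norm (F xK)) \<le> (\<Sum>xK\<in>pg. e * (Sup (snd xK) - Inf (snd xK)))"
      proof (intro sum_mono)
        fix xK assume "xK \<in> pg"
        then obtain x K where xK: "xK = (x,K)" "(x,K) \<in> p" "x \<notin> B" unfolding pg_def by (cases xK) auto
        note KK = Kform[OF xK(2)]
        have xcd: "x \<in> {c..d}" using KK by auto
        have "Sup K \<in> K" "Inf K \<in> K" using KK by (metis atLeastAtMost_iff order.trans order.refl)+
        then have d1: "\<bar>Sup K - x\<bar> < r x" "\<bar>Inf K - x\<bar> < r x" using KK by (auto simp: dist_real_def)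
        have "norm (h (Sup K) - h (Inf K)) \<le> norm (h (Sup K) - h x) + norm (h (Inf K) - h x)"
          by (metis norm_triangle_ineq4 diff_diff_eq2 add_diff_eq diff_add_cancel)
        also have "\<dots> \<le> e * \<bar>Sup K - x\<bar> + e * \<bar>Inf K - x\<bar>"
          using r xK(3) xcd d1 by (intro add_mono) auto
        also have "\<dots> = e * (Sup K - Inf K)" using KK by (simp add: algebra_simps)
        finally show "norm (F xK) \<le> e * (Sup (snd xK) - Inf (snd xK))" unfolding F_def xK by simp
      qed
      also have "\<dots> = e * (\<Sum>xK\<in>pg. Sup (snd xK) - Inf (snd xK))" by (simp add: sum_distrib_left)
      also have "(\<Sum>xK\<in>pg. Sup (snd xK) - Inf (snd xK)) \<le> (\<Sum>xK\<in>p. Sup (snd xK) - Inf (snd xK))"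
        using finp Kform by (intro sum_mono2) (fastforce simp: pg_def)+
      also have "(\<Sum>xK\<in>p. Sup (snd xK) - Inf (snd xK)) = (\<Sum>(x,K)\<in>p. Henstock_Kurzweil_Integration.content K)"
      proof (intro sum.cong refl)
        fix xK assume "xK \<in> p"
        then obtain x K where xK: "xK = (x,K)" "(x,K) \<in> p" by (cases xK) auto
        note KK = Kform[OF xK(2)]
        have "Henstock_Kurzweil_Integration.content K = Sup K - Inf K" using KK by (metis content_real order.trans)
        then show "Sup (snd xK) - Inf (snd xK) = (case xK of (x, K) \<Rightarrow> Henstock_Kurzweil_Integration.content K)" using xK by simp
      qed
      also have "\<dots> = d - c" using additive_content_tagged_division[of p c d] p cd by simp
      finally show ?thesis using e by (simp add: mult_left_mono)
    qed
    also have "(\<Sum>xK\<in>pb. norm (F xK)) < e"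
    proof -
      obtain f where bij: "bij_betw f {0..<card pb} pb" using ex_bij_betw_nat_finite[OF fins(2)] by blast
      define n where "n = card pb"
      define I where "I = (\<lambda>i. (Inf (snd (f i)), Sup (snd (f i))))"
      have fin_pb: "\<And>i. i < n \<Longrightarrow> f i \<in> pb" using bij unfolding n_def bij_betw_def by auto
      have inj: "\<And>i j. i < n \<Longrightarrow> j < n \<Longrightarrow> f i = f j \<Longrightarrow> i = j"
        using bij unfolding n_def bij_betw_def inj_on_def by auto
      have props: "c \<le> fst (I i) \<and> fst (I i) < snd (I i) \<and> snd (I i) \<le> d \<and>
          {fst (I i)<..snd (I i)} \<subseteq> U \<and> f i \<in> p" if i_lt: "i < n" for i
      proof -
        obtain x K where xK: "f i = (x,K)" "(x,K) \<in> p" "x \<in> B" "Inf K < Sup K"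
          using fin_pb[OF i_lt] unfolding pb_def by (cases "f i") auto
        note KK = Kform[OF xK(2)]
        have "{Inf K<..Sup K} \<subseteq> K" using KK by auto
        also have "\<dots> \<subseteq> ball x (r x)" using KK by auto
        also have "\<dots> \<subseteq> U" using r xK(3) by auto
        finally show ?thesis using KK xK unfolding I_def by auto
      qed
      have sep: "snd (I i) \<le> fst (I j) \<or> snd (I j) \<le> fst (I i)" if "i < n" "j < n" "i \<noteq> j" for i j
      proof (rule ccontr)
        assume nsep: "\<not> (snd (I i) \<le> fst (I j) \<or> snd (I j) \<le> fst (I i))"
        have "f i \<noteq> f j" using inj that by blast
        obtain x1 K1 where 1: "f i = (x1,K1)" by (cases "f i") auto
        obtain x2 K2 where 2: "f j = (x2,K2)" by (cases "f j") auto
        have "interior K1 \<inter> interior K2 = {}"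
          using pD(5)[of x1 K1 x2 K2] props[OF that(1)] props[OF that(2)] \<open>f i \<noteq> f j\<close> 1 2 by auto
        moreover have "K1 = {Inf K1..Sup K1}" "K2 = {Inf K2..Sup K2}"
          using Kform props[OF that(1)] props[OF that(2)] 1 2 by auto
        ultimately have emp: "{Inf K1<..<Sup K1} \<inter> {Inf K2<..<Sup K2} = {}"
          by (metis interior_atLeastAtMost_real)
        define m where "m = (max (Inf K1) (Inf K2) + min (Sup K1) (Sup K2)) / 2"
        have "Inf K1 < Sup K1" "Inf K2 < Sup K2" "Inf K2 < Sup K1" "Inf K1 < Sup K2"
          using props[OF that(1)] props[OF that(2)] nsep 1 2 unfolding I_def by auto
        then have "m \<in> {Inf K1<..<Sup K1} \<inter> {Inf K2<..<Sup K2}" unfolding m_def by auto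
        with emp show False by blast
      qed
      have len: "(\<Sum>i<n. snd (I i) - fst (I i)) < \<delta>"
      proof -
        have disj: "disjoint_family_on (\<lambda>i. {fst (I i)<..snd (I i)}) {..<n}"
          unfolding disjoint_family_on_def
        proof (intro ballI impI)
          fix i j assume "i \<in> {..<n}" "j \<in> {..<n}" "i \<noteq> j"
          then have "snd (I i) \<le> fst (I j) \<or> snd (I j) \<le> fst (I i)" using sep by auto
          then show "{fst (I i)<..snd (I i)} \<inter> {fst (I j)<..snd (I j)} = {}" by auto
        qed
        have "ennreal (\<Sum>i<n. snd (I i) - fst (I i)) = (\<Sum>i<n. ennreal (snd (I i) - fst (I i)))"
          using props by (intro sum_ennreal[symmetric]) (auto simp: less_imp_le)
        also have "\<dots> = (\<Sum>i<n. emeasure lborel {fst (I i)<..snd (I i)})"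
          using props by (intro sum.cong refl) (auto simp: emeasure_lborel_Ioc less_imp_le)
        also have "\<dots> = emeasure lborel (\<Union>i<n. {fst (I i)<..snd (I i)})"
          using disj by (intro sum_emeasure) auto
        also have "\<dots> \<le> emeasure lborel U"
          using props U(1) by (intro emeasure_mono) auto
        also have "\<dots> < \<delta>" by (rule UB)
        finally have "ennreal (\<Sum>i<n. snd (I i) - fst (I i)) < ennreal \<delta>" .
        then show ?thesis using ennreal_less_iff props
          by (metis (no_types, lifting) ennreal_less_iff less_imp_le sum_nonneg diff_ge_0_iff_ge lessThan_iff)
      qed
      have "(\<Sum>i<n. norm (h (snd (I i)) - h (fst (I i)))) < e"
        using ac\<delta> props sep len by (auto simp: less_imp_le)
      moreover have "(\<Sum>i<n. norm (h (snd (I i)) - h (fst (I i)))) = (\<Sum>xK\<in>pb. norm (F xK))"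
      proof -
        have "(\<Sum>xK\<in>pb. norm (F xK)) = (\<Sum>i\<in>{0..<n}. norm (F (f i)))"
          using sum.reindex_bij_betw[OF bij, of "\<lambda>xK. norm (F xK)"] unfolding n_def by simp
        then show ?thesis unfolding F_def I_def by (simp add: lessThan_atLeast0)
      qed
      ultimately show ?thesis by simp
    qed
    finally show ?thesis by simp
  qed
  show ?thesis
  proof (rule ccontr)
    assume "h d \<noteq> h c"
    then have z: "norm (h d - h c) > 0" by simp
    define e where "e = norm (h d - h c) / (2 * (d - c + 1))"
    have "e > 0" using z cd unfolding e_def by simp
    have "norm (h d - h c) \<le> e * (d - c + 1)" using main[OF \<open>e > 0\<close>] by (simp add: algebra_simps)
    also have "\<dots> = norm (h d - h c) / 2"
    proof -
      have "d - c + 1 \<noteq> 0" using cd by linarith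
      then show ?thesis unfolding e_def by (simp add: field_simps)
    qed
    finally show False using z by simp
  qed
qed



lemma ac_ftc:
  fixes f g :: "real \<Rightarrow> 'a::euclidean_space"
  assumes cd: "c \<le> d" and ac: "abs_cont_on c d f" and gc: "continuous_on {c..d} g"
    and N: "N \<in> null_sets lborel"
    and der: "\<And>x. x \<in> {c<..<d} \<Longrightarrow> x \<notin> N \<Longrightarrow> (f has_vector_derivative g x) (at x)"
    and x: "x \<in> {c..d}"
  shows "(f has_vector_derivative g x) (at x within {c..d})"
proof -
  define G where "G = (\<lambda>t. integral {c..t} g)"
  have Gder: "(G has_vector_derivative g t) (at t within {c..d})" if "t \<in> {c..d}" for t
    unfolding G_def using integral_has_vector_derivative[OF gc that] .
  have "bounded (g ` {c..d})" by (intro compact_imp_bounded compact_continuous_image gc) auto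
  then obtain Bd where Bd: "Bd > 0" "\<forall>y\<in>g ` {c..d}. norm y \<le> Bd" using bounded_pos by blast
  have lip: "norm (G v - G u) \<le> Bd * (v - u)" if "c \<le> u" "u \<le> v" "v \<le> d" for u v
  proof -
    have int: "g integrable_on {c..v}"
      using that by (intro integrable_continuous_real continuous_on_subset[OF gc]) auto
    have "G u + integral {u..v} g = G v"
      unfolding G_def using Henstock_Kurzweil_Integration.integral_combine[OF that(1,2) int] by simp
    then have eq: "G v - G u = integral {u..v} g" by (simp add: algebra_simps)
    have int2: "g integrable_on {u..v}"
      using that by (intro integrable_continuous_real continuous_on_subset[OF gc]) auto
    have "norm (integral {u..v} g) \<le> Bd * Henstock_Kurzweil_Integration.content (cbox u v)"
      using int2 Bd that by (intro has_integral_bound[of Bd g]) (auto simp: integrable_integral)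
    then show ?thesis using eq that by simp
  qed
  have eqf: "f t = f c + G t" if t: "t \<in> {c..d}" for t
  proof -
    have "(\<lambda>s. f s - G s) t = (\<lambda>s. f s - G s) c"
    proof (rule ac_zero_deriv[where N=N])
      show "c \<le> t" using t by simp
      show "abs_cont_on c t (\<lambda>s. f s - G s)"
        using t Bd by (intro abs_cont_on_diff abs_cont_on_mono[OF ac] abs_cont_on_lipschitz[where L=Bd] lip) auto
      show "N \<in> null_sets lborel" by fact
      fix s assume s: "s \<in> {c<..<t}" "s \<notin> N"
      then have s': "s \<in> {c<..<d}" using t by auto
      then have "s \<in> interior {c..d}" by simp
      then have "(G has_vector_derivative g s) (at s)"
        using Gder[of s] s' at_within_interior[of s "{c..d}"] by auto
      from has_vector_derivative_diff[OF der[OF s' s(2)] this]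
      show "((\<lambda>s. f s - G s) has_vector_derivative 0) (at s)" by simp
    qed
    then show ?thesis unfolding G_def by (simp add: diff_eq_eq add.commute)
  qed
  have "((\<lambda>t. f c + G t) has_vector_derivative g x) (at x within {c..d})"
    using has_vector_derivative_add[OF has_vector_derivative_const Gder[OF x]] by simp
  then show ?thesis
    using has_vector_derivative_transform[OF x, of f "\<lambda>t. f c + G t"] eqf by blast
qed



lemma ode_unique_real:
  fixes p pd :: "real \<Rightarrow> real"
  assumes cd: "c \<le> d"
    and dp: "\<And>x. x\<in>{c..d} \<Longrightarrow> (p has_real_derivative pd x) (at x within {c..d})"
    and dpd: "\<And>x. x\<in>{c..d} \<Longrightarrow> (pd has_real_derivative (-\<gamma> * p x)) (at x within {c..d})"
    and pt: "pt = c \<or> pt = d" and z: "p pt = 0" "pd pt = 0"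
    and x: "x \<in> {c..d}"
  shows "p x = 0"
proof -
  define K where "K = \<bar>1 - \<gamma>\<bar>"
  define E where "E = (\<lambda>t. p t * p t + pd t * pd t)"
  have dE: "(E has_real_derivative 2 * (1 - \<gamma>) * (p t * pd t)) (at t within {c..d})"
    if t: "t \<in> {c..d}" for t
  proof -
    have "(E has_real_derivative (pd t * p t + pd t * p t + ((-\<gamma> * p t) * pd t + (-\<gamma> * p t) * pd t))) (at t within {c..d})"
      unfolding E_def by (intro DERIV_add DERIV_mult dp dpd t)
    then show ?thesis by (simp add: algebra_simps)
  qed
  have bnd: "\<bar>2 * (1 - \<gamma>) * (p t * pd t)\<bar> \<le> K * E t" for t
  proof -
    have "2 * \<bar>p t * pd t\<bar> \<le> E t"
    proof -
      have "0 \<le> (\<bar>p t\<bar> - \<bar>pd t\<bar>) * (\<bar>p t\<bar> - \<bar>pd t\<bar>)" by simp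
      then show ?thesis unfolding E_def by (simp add: algebra_simps abs_mult)
    qed
    then have h: "K * (2 * \<bar>p t * pd t\<bar>) \<le> K * E t" unfolding K_def by (intro mult_left_mono) auto
    have "\<bar>2 * (1 - \<gamma>) * (p t * pd t)\<bar> = \<bar>(1 - \<gamma>) * (2 * (p t * pd t))\<bar>"
      by (rule arg_cong[where f=abs]) (simp add: algebra_simps)
    also have "\<dots> = \<bar>1 - \<gamma>\<bar> * \<bar>2 * (p t * pd t)\<bar>" by (rule abs_mult)
    also have "\<bar>2 * (p t * pd t)\<bar> = 2 * \<bar>p t * pd t\<bar>" by (simp add: abs_mult)
    finally show ?thesis using h unfolding K_def by simp
  qed
  have Enn: "E t \<ge> 0" for t unfolding E_def by simp
  have pE: "p t * p t \<le> E t" for t unfolding E_def by simp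
  have int: "s \<in> {c<..<d} \<Longrightarrow> at s within {c..d} = at s" for s
    by (intro at_within_interior) simp
  have "E x = 0"
  proof (cases "pt = d")
    case True
    define F where "F = (\<lambda>t. E t * exp (K * t))"
    have dF: "(F has_real_derivative (2 * (1 - \<gamma>) * (p t * pd t) + K * E t) * exp (K * t)) (at t within {c..d})"
      if t: "t \<in> {c..d}" for t
    proof -
      have "(F has_real_derivative (2 * (1 - \<gamma>) * (p t * pd t)) * exp (K * t) + (exp (K * t) * K) * E t) (at t within {c..d})"
        unfolding F_def
        by (intro DERIV_mult dE t DERIV_chain2[OF DERIV_exp] DERIV_cmult_Id)
      then show ?thesis by (simp add: algebra_simps)
    qed
    have "F x \<le> F d"
    proof (rule DERIV_nonneg_imp_increasing_open[of x d F])
      show "x \<le> d" using x by simp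
      fix s assume s: "x < s" "s < d"
      then have sc: "s \<in> {c<..<d}" using x by auto
      show "\<exists>y. (F has_real_derivative y) (at s) \<and> 0 \<le> y"
      proof (intro exI conjI)
        show "(F has_real_derivative (2 * (1 - \<gamma>) * (p s * pd s) + K * E s) * exp (K * s)) (at s)"
          using dF[of s] sc int[OF sc] by auto
        have "0 \<le> 2 * (1 - \<gamma>) * (p s * pd s) + K * E s" using bnd[of s] by linarith
        then show "0 \<le> (2 * (1 - \<gamma>) * (p s * pd s) + K * E s) * exp (K * s)" by simp
      qed
    next
      have "continuous_on {c..d} F" by (rule DERIV_continuous_on[OF dF])
      then show "continuous_on {x..d} F" by (rule continuous_on_subset) (use x in auto)
    qed
    moreover have "F d = 0" unfolding F_def E_def using z True by simp
    moreover have "F x \<ge> 0" unfolding F_def using Enn by simp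
    ultimately have "F x = 0" by simp
    then show ?thesis unfolding F_def by simp
  next
    case False
    with pt have x0c: "pt = c" by simp
    define F where "F = (\<lambda>t. - (E t * exp (- K * t)))"
    have dF: "(F has_real_derivative - ((2 * (1 - \<gamma>) * (p t * pd t) - K * E t) * exp (- K * t))) (at t within {c..d})"
      if t: "t \<in> {c..d}" for t
    proof -
      have "(F has_real_derivative - ((2 * (1 - \<gamma>) * (p t * pd t)) * exp (- K * t) + (exp (- K * t) * (- K)) * E t)) (at t within {c..d})"
        unfolding F_def
        by (intro DERIV_minus DERIV_mult dE t DERIV_chain2[OF DERIV_exp] DERIV_cmult_Id)
      then show ?thesis by (simp add: algebra_simps)
    qed
    have "F c \<le> F x"
    proof (rule DERIV_nonneg_imp_increasing_open[of c x F])
      show "c \<le> x" using x by simp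
      fix s assume s: "c < s" "s < x"
      then have sc: "s \<in> {c<..<d}" using x by auto
      show "\<exists>y. (F has_real_derivative y) (at s) \<and> 0 \<le> y"
      proof (intro exI conjI)
        show "(F has_real_derivative - ((2 * (1 - \<gamma>) * (p s * pd s) - K * E s) * exp (- K * s))) (at s)"
          using dF[of s] sc int[OF sc] by auto
        have "2 * (1 - \<gamma>) * (p s * pd s) - K * E s \<le> 0" using bnd[of s] by linarith
        then show "0 \<le> - ((2 * (1 - \<gamma>) * (p s * pd s) - K * E s) * exp (- K * s))"
          by (simp add: mult_nonpos_nonneg)
      qed
    next
      have "continuous_on {c..d} F" by (rule DERIV_continuous_on[OF dF])
      then show "continuous_on {c..x} F" by (rule continuous_on_subset) (use x in auto)
    qed
    moreover have "F c = 0" unfolding F_def E_def using z x0c by simp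
    moreover have "F x \<le> 0" unfolding F_def using Enn by simp
    ultimately have "F x = 0" by simp
    then show ?thesis unfolding F_def by simp
  qed
  then have "p x * p x \<le> 0" using pE[of x] by simp
  then show ?thesis by (simp add: mult_le_0_iff) (metis mult_le_0_iff order_antisym_conv zero_le_square)
qed

lemma ode_unique:
  fixes v vd :: "real \<Rightarrow> complex"
  assumes cd: "c \<le> d"
    and dv: "\<And>x. x\<in>{c..d} \<Longrightarrow> (v has_vector_derivative vd x) (at x within {c..d})"
    and dvd: "\<And>x. x\<in>{c..d} \<Longrightarrow> (vd has_vector_derivative (-\<gamma>) *\<^sub>R v x) (at x within {c..d})"
    and pt: "pt = c \<or> pt = d" and z: "v pt = 0" "vd pt = 0"
    and x: "x \<in> {c..d}"
  shows "v x = 0"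
proof -
  have "Re (v x) = 0"
  proof (rule ode_unique_real[where p = "\<lambda>t. Re (v t)" and pd = "\<lambda>t. Re (vd t)" and \<gamma> = \<gamma>, OF cd _ _ pt _ _ x])
    fix t assume t: "t \<in> {c..d}"
    show "((\<lambda>t. Re (v t)) has_real_derivative Re (vd t)) (at t within {c..d})"
      unfolding has_real_derivative_iff_has_vector_derivative
      using bounded_linear.has_vector_derivative[OF bounded_linear_Re dv[OF t]] .
    show "((\<lambda>t. Re (vd t)) has_real_derivative - \<gamma> * Re (v t)) (at t within {c..d})"
      unfolding has_real_derivative_iff_has_vector_derivative
      using bounded_linear.has_vector_derivative[OF bounded_linear_Re dvd[OF t]] by simp
  qed (use z in auto)
  moreover have "Im (v x) = 0"
  proof (rule ode_unique_real[where p = "\<lambda>t. Im (v t)" and pd = "\<lambda>t. Im (vd t)" and \<gamma> = \<gamma>, OF cd _ _ pt _ _ x])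
    fix t assume t: "t \<in> {c..d}"
    show "((\<lambda>t. Im (v t)) has_real_derivative Im (vd t)) (at t within {c..d})"
      unfolding has_real_derivative_iff_has_vector_derivative
      using bounded_linear.has_vector_derivative[OF bounded_linear_Im dv[OF t]] .
    show "((\<lambda>t. Im (vd t)) has_real_derivative - \<gamma> * Im (v t)) (at t within {c..d})"
      unfolding has_real_derivative_iff_has_vector_derivative
      using bounded_linear.has_vector_derivative[OF bounded_linear_Im dvd[OF t]] by simp
  qed (use z in auto)
  ultimately show ?thesis by (simp add: complex_eq_iff)
qed

definition Sf :: "real \<Rightarrow> real \<Rightarrow> real" where
  "Sf g t = (if g > 0 then sin (sqrt g * t) / sqrt g else if g < 0 then sinh (sqrt (-g) * t) / sqrt (-g) else t)"
definition Cf :: "real \<Rightarrow> real \<Rightarrow> real" where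
  "Cf g t = (if g > 0 then cos (sqrt g * t) else if g < 0 then cosh (sqrt (-g) * t) else 1)"
definition Qf :: "real \<Rightarrow> real \<Rightarrow> real" where
  "Qf g t = (if g = 0 then t^3/3 else (t - Sf g t * Cf g t) / (2 * g))"

lemma Sf0 [simp]: "Sf g 0 = 0" and Cf0 [simp]: "Cf g 0 = 1" and Qf0 [simp]: "Qf g 0 = 0"
  by (auto simp: Sf_def Cf_def Qf_def)

lemma Sf_deriv: "(Sf g has_real_derivative Cf g t) (at t)"
proof -
  consider "g > 0" | "g < 0" | "g = 0" by linarith
  then show ?thesis
  proof cases
    case 1
    have sq: "sqrt g * sqrt g = g" using 1 by simp
    have "((\<lambda>t. sin (sqrt g * t) / sqrt g) has_real_derivative cos (sqrt g * t)) (at t)"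
      using 1 by (auto intro!: derivative_eq_intros simp: mult.assoc sq)
    then show ?thesis using 1 unfolding Sf_def Cf_def by simp
  next
    case 2
    have sq: "sqrt (-g) * sqrt (-g) = -g" using 2 by simp
    have "((\<lambda>t. sinh (sqrt (-g) * t) / sqrt (-g)) has_real_derivative cosh (sqrt (-g) * t)) (at t)"
      using 2 by (auto intro!: derivative_eq_intros simp: mult.assoc sq)
    then show ?thesis using 2 unfolding Sf_def Cf_def by simp
  next
    case 3
    then show ?thesis unfolding Sf_def Cf_def by (simp add: DERIV_ident)
  qed
qed

lemma Cf_deriv: "(Cf g has_real_derivative (- g * Sf g t)) (at t)"
proof -
  consider "g > 0" | "g < 0" | "g = 0" by linarith
  then show ?thesis
  proof cases
    case 1
    have "((\<lambda>t. cos (sqrt g * t)) has_real_derivative - sin (sqrt g * t) * (sqrt g * 1)) (at t)"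
      by (auto intro!: derivative_eq_intros)
    moreover have "- sin (sqrt g * t) * (sqrt g * 1) = - g * (sin (sqrt g * t) / sqrt g)"
      using 1 by (simp add: field_simps)
    ultimately show ?thesis using 1 unfolding Sf_def Cf_def by simp
  next
    case 2
    have "((\<lambda>t. cosh (sqrt (-g) * t)) has_real_derivative sinh (sqrt (-g) * t) * (sqrt (-g) * 1)) (at t)"
      by (auto intro!: derivative_eq_intros)
    moreover have "sinh (sqrt (-g) * t) * (sqrt (-g) * 1) = - g * (sinh (sqrt (-g) * t) / sqrt (-g))"
    proof -
      have "sqrt (-g) * sqrt (-g) = -g" using 2 by simp
      then show ?thesis using 2 by (simp add: field_simps) (simp add: mult.assoc[symmetric])
    qed
    ultimately show ?thesis using 2 unfolding Sf_def Cf_def by simp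
  next
    case 3
    then show ?thesis unfolding Sf_def Cf_def by simp
  qed
qed

lemma energy: "(Cf g t)^2 + g * (Sf g t)^2 = 1"
proof -
  consider "g > 0" | "g < 0" | "g = 0" by linarith
  then show ?thesis
  proof cases
    case 1
    have "g * (sin (sqrt g * t) / sqrt g)^2 = (sin (sqrt g * t))^2"
      using 1 by (simp add: power_divide)
    then show ?thesis using 1 unfolding Sf_def Cf_def by (simp add: sin_cos_squared_add2)
  next
    case 2
    have "g * (sinh (sqrt (-g) * t) / sqrt (-g))^2 = - (sinh (sqrt (-g) * t) * sinh (sqrt (-g) * t))"
      using 2 by (simp add: power_divide power2_eq_square)
    moreover have "(cosh (sqrt (-g) * t))^2 = (sinh (sqrt (-g) * t))^2 + 1" by (rule cosh_square_eq)
    ultimately show ?thesis using 2 unfolding Sf_def Cf_def by (simp add: power2_eq_square)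
  next
    case 3
    then show ?thesis unfolding Sf_def Cf_def by simp
  qed
qed

lemma Qf_deriv: "(Qf g has_real_derivative (Sf g t)^2) (at t)"
proof (cases "g = 0")
  case True
  have "((\<lambda>t. t^3/3) has_real_derivative (t^2)) (at t)"
    by (auto intro!: derivative_eq_intros simp: numeral_3_eq_3 power2_eq_square)
  then show ?thesis using True unfolding Qf_def Sf_def by (simp add: power2_eq_square)
next
  case False
  have "((\<lambda>t. (t - Sf g t * Cf g t) / (2 * g)) has_real_derivative
      (1 - (Cf g t * Cf g t + (- g * Sf g t) * Sf g t)) / (2 * g)) (at t)"
    by (intro DERIV_cdivide DERIV_diff DERIV_ident DERIV_mult Sf_deriv Cf_deriv)
  moreover have "(1 - (Cf g t * Cf g t + (- g * Sf g t) * Sf g t)) / (2 * g) = (Sf g t)^2"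
    using energy[of g t] False by (simp add: field_simps power2_eq_square)
  ultimately show ?thesis using False unfolding Qf_def by simp
qed

lemma sin_ge_kcos:
  assumes "0 < k" "k < pi/2" shows "k * cos k \<le> sin k"
proof -
  obtain z where z: "0 < z" "z < k" "sin k - sin 0 = (k - 0) * cos z"
    using MVT2[of 0 k sin cos] assms by (auto intro: DERIV_sin)
  have "cos k \<le> cos z" using z assms by (intro cos_monotone_0_pi_le) auto
  then show ?thesis using z assms by (simp add: mult_left_mono)
qed

lemma sinh_le_kcosh:
  fixes k :: real
  assumes "0 < k" shows "sinh k \<le> k * cosh k"
proof -
  have d: "(sinh has_real_derivative cosh x) (at x)" for x :: real
    using has_field_derivative_sinh[OF DERIV_ident] by simp
  obtain z where z: "0 < z" "z < k" "sinh k - sinh 0 = (k - 0) * cosh z"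
    using MVT2[of 0 k "sinh::real\<Rightarrow>real" "cosh::real\<Rightarrow>real"] assms d by blast
  have "cosh z \<le> cosh k" using z assms by (subst cosh_real_nonneg_le_iff) auto
  then show ?thesis using z assms by (simp add: mult_left_mono)
qed



lemma key_ineq:
  fixes \<alpha> \<beta> :: real
  assumes a: "\<alpha> < pi\<^sup>2/4" and b: "\<beta> > 0" and ba: "\<beta> - \<alpha> > 0" and ab: "\<alpha> + \<beta> > 0"
  shows "2 * \<beta> * Qf \<alpha> 1 < \<beta> * (Sf \<alpha> 1)\<^sup>2 + (Cf \<alpha> 1)\<^sup>2 + Sf \<alpha> 1 * Cf \<alpha> 1"
proof -
  define s where "s = Sf \<alpha> 1"
  define c where "c = Cf \<alpha> 1"
  have en: "c\<^sup>2 + \<alpha> * s\<^sup>2 = 1" using energy[of \<alpha> 1] unfolding s_def c_def .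
  consider "\<alpha> > 0" | "\<alpha> < 0" | "\<alpha> = 0" by linarith
  then show ?thesis
  proof cases
    case 1
    define k where "k = sqrt \<alpha>"
    have k0: "k > 0" using 1 unfolding k_def by simp
    have "k < sqrt (pi\<^sup>2/4)" unfolding k_def using a by (intro real_sqrt_less_mono)
    also have "sqrt (pi\<^sup>2/4) = pi/2" by (simp add: real_sqrt_divide)
    finally have kpi: "k < pi/2" .
    have sd: "s = sin k / k" and cd: "c = cos k" using 1 unfolding s_def c_def Sf_def Cf_def k_def by auto
    have cpos: "c > 0" unfolding cd using k0 kpi by (intro cos_gt_zero) auto
    have "k * cos k \<le> sin k" using sin_ge_kcos[OF k0 kpi] .
    then have sc: "c \<le> s" unfolding sd cd using k0 by (simp add: pos_le_divide_eq mult.commute)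
    have Q: "Qf \<alpha> 1 = (1 - s * c) / (2 * \<alpha>)" using 1 unfolding Qf_def s_def c_def by simp
    have h1: "(\<alpha> + \<beta>) * c \<le> (\<alpha> + \<beta>) * s" using ab sc by (intro mult_left_mono) auto
    have h2: "(\<beta> - \<alpha>) * c < (\<alpha> + \<beta>) * c" using 1 cpos by (intro mult_strict_right_mono) auto
    have "0 < (\<alpha> + \<beta>) * s - (\<beta> - \<alpha>) * c" using h1 h2 by linarith
    then have pos: "0 < c * ((\<alpha> + \<beta>) * s - (\<beta> - \<alpha>) * c)" by (rule mult_pos_pos[OF cpos])
    have "\<beta> * (1 - s * c) < \<alpha> * (\<beta> * s\<^sup>2 + c\<^sup>2 + s * c)"
    proof -
      have "\<alpha> * (\<beta> * s\<^sup>2 + c\<^sup>2 + s * c) - \<beta> * (1 - s * c)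
          = \<alpha> * (\<beta> * s\<^sup>2 + c\<^sup>2 + s * c) - \<beta> * (c\<^sup>2 + \<alpha> * s\<^sup>2 - s * c)" using en by simp
      also have "\<dots> = c * ((\<alpha> + \<beta>) * s - (\<beta> - \<alpha>) * c)" by (simp add: algebra_simps power2_eq_square)
      finally show ?thesis using pos by linarith
    qed
    then have "\<beta> * (1 - s * c) / \<alpha> < \<beta> * s\<^sup>2 + c\<^sup>2 + s * c" using 1 by (simp add: pos_divide_less_eq mult.commute)
    moreover have "2 * \<beta> * Qf \<alpha> 1 = \<beta> * (1 - s * c) / \<alpha>" unfolding Q using 1 by simp
    ultimately show ?thesis unfolding s_def c_def by (simp add: mult.commute)
  next
    case 2
    define k where "k = sqrt (-\<alpha>)"
    have k0: "k > 0" using 2 unfolding k_def by simp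
    have sd: "s = sinh k / k" and cd: "c = cosh k" using 2 unfolding s_def c_def Sf_def Cf_def k_def by auto
    have cpos: "c > 0" unfolding cd by simp
    have "sinh k \<le> k * cosh k" using sinh_le_kcosh[OF k0] .
    then have sc: "s \<le> c" unfolding sd cd using k0 by (simp add: pos_divide_le_eq mult.commute)
    have spos: "s > 0" unfolding sd using k0 by (simp add: sinh_real_pos_iff)
    have Q: "Qf \<alpha> 1 = (1 - s * c) / (2 * \<alpha>)" using 2 unfolding Qf_def s_def c_def by simp
    have h1: "(\<alpha> + \<beta>) * s \<le> (\<alpha> + \<beta>) * c" using ab sc by (intro mult_left_mono) auto
    have h2: "(\<alpha> + \<beta>) * c < (\<beta> - \<alpha>) * c" using 2 cpos by (intro mult_strict_right_mono) auto
    have "0 < (\<beta> - \<alpha>) * c - (\<alpha> + \<beta>) * s" using h1 h2 by linarith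
    then have pos: "0 < c * ((\<beta> - \<alpha>) * c - (\<alpha> + \<beta>) * s)" by (rule mult_pos_pos[OF cpos])
    have "\<alpha> * (\<beta> * s\<^sup>2 + c\<^sup>2 + s * c) < \<beta> * (1 - s * c)"
    proof -
      have "\<beta> * (1 - s * c) - \<alpha> * (\<beta> * s\<^sup>2 + c\<^sup>2 + s * c)
          = \<beta> * (c\<^sup>2 + \<alpha> * s\<^sup>2 - s * c) - \<alpha> * (\<beta> * s\<^sup>2 + c\<^sup>2 + s * c)" using en by simp
      also have "\<dots> = c * ((\<beta> - \<alpha>) * c - (\<alpha> + \<beta>) * s)" by (simp add: algebra_simps power2_eq_square)
      finally show ?thesis using pos by linarith
    qed
    then have "\<beta> * (1 - s * c) / \<alpha> < \<beta> * s\<^sup>2 + c\<^sup>2 + s * c" using 2 by (simp add: neg_divide_less_eq mult.commute)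
    moreover have "2 * \<beta> * Qf \<alpha> 1 = \<beta> * (1 - s * c) / \<alpha>" unfolding Q using 2 by simp
    ultimately show ?thesis unfolding s_def c_def by (simp add: mult.commute)
  next
    case 3
    then show ?thesis using b unfolding Qf_def Sf_def Cf_def by simp
  qed
qed

lemma Sf_refl_deriv: "((\<lambda>x. Sf g (a - x)) has_real_derivative - Cf g (a - x)) (at x within s)"
proof -
  have "((\<lambda>x. a - x) has_real_derivative -1) (at x within s)" by (auto intro!: derivative_eq_intros)
  from DERIV_chain2[OF Sf_deriv[of g "a - x"] this] show ?thesis by simp
qed

lemma Cf_refl_deriv: "((\<lambda>x. Cf g (a - x)) has_real_derivative g * Sf g (a - x)) (at x within s)"
proof -
  have "((\<lambda>x. a - x) has_real_derivative -1) (at x within s)" by (auto intro!: derivative_eq_intros)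
  from DERIV_chain2[OF Cf_deriv[of g "a - x"] this] show ?thesis by simp
qed

lemma Qf_refl_deriv: "((\<lambda>x. Qf g (a - x)) has_real_derivative - (Sf g (a - x))\<^sup>2) (at x within s)"
proof -
  have "((\<lambda>x. a - x) has_real_derivative -1) (at x within s)" by (auto intro!: derivative_eq_intros)
  from DERIV_chain2[OF Qf_deriv[of g "a - x"] this] show ?thesis by simp
qed

lemma Sf_shift_deriv: "((\<lambda>x. Sf g (x + a)) has_real_derivative Cf g (x + a)) (at x within s)"
proof -
  have "((\<lambda>x. x + a) has_real_derivative 1) (at x within s)" by (auto intro!: derivative_eq_intros)
  from DERIV_chain2[OF Sf_deriv[of g "x + a"] this] show ?thesis by simp
qed

lemma Cf_shift_deriv: "((\<lambda>x. Cf g (x + a)) has_real_derivative - g * Sf g (x + a)) (at x within s)"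
proof -
  have "((\<lambda>x. x + a) has_real_derivative 1) (at x within s)" by (auto intro!: derivative_eq_intros)
  from DERIV_chain2[OF Cf_deriv[of g "x + a"] this] show ?thesis by simp
qed

lemma Qf_shift_deriv: "((\<lambda>x. Qf g (x + a)) has_real_derivative (Sf g (x + a))\<^sup>2) (at x within s)"
proof -
  have "((\<lambda>x. x + a) has_real_derivative 1) (at x within s)" by (auto intro!: derivative_eq_intros)
  from DERIV_chain2[OF Qf_deriv[of g "x + a"] this] show ?thesis by simp
qed

lemma vec_const_deriv:
  fixes A :: complex
  assumes "(r has_real_derivative r') (at x within s)"
  shows "((\<lambda>x. r x *\<^sub>R A) has_vector_derivative r' *\<^sub>R A) (at x within s)"
  using has_vector_derivative_scaleR[OF assms has_vector_derivative_const[of A]] by simp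



lemma eigen_neg:
  fixes q0 lam :: real and u :: "real \<Rightarrow> complex"
  assumes q0: "q0 < - (pi\<^sup>2 / 4)" and lam: "lam < q0 + pi\<^sup>2 / 4"
    and ef: "is_eigenfunction (-1) 1 (\<lambda>x. if x \<ge> 0 then 1 else -1) (\<lambda>x. - q0) lam u"
  shows "integral {-1..1} (\<lambda>x. (if x \<ge> 0 then 1 else -1) * (cmod (u x))\<^sup>2) < 0"
proof -
  define \<alpha> where "\<alpha> = lam - q0"
  define \<beta> where "\<beta> = - lam - q0"
  have pi2: "pi\<^sup>2 > 0" by simp
  have q0neg: "q0 < 0" using q0 pi2 by linarith
  have lamneg: "lam < 0" using q0 lam by linarith
  have al: "\<alpha> < pi\<^sup>2/4" unfolding \<alpha>_def using lam by linarith
  have bpos: "\<beta> > 0" unfolding \<beta>_def using q0 lam pi2 by linarith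
  have ba: "\<beta> - \<alpha> > 0" unfolding \<alpha>_def \<beta>_def using lamneg by linarith
  have abp: "\<alpha> + \<beta> > 0" unfolding \<alpha>_def \<beta>_def using q0neg by linarith
  obtain u' where D1: "\<And>x. x\<in>{-1..1} \<Longrightarrow> (u has_vector_derivative u' x) (at x within {-1..1})"
    and uc': "continuous_on {-1..1} u'" and ac: "abs_cont_on (-1) 1 u'"
    and ae: "AE x in lborel. x \<in> {-1<..<1} \<longrightarrow>
        (u' has_vector_derivative (- complex_of_real (lam * (if x \<ge> 0 then 1 else -1) + - q0) * u x)) (at x)"
    and um1: "u (-1) = 0" and u1: "u 1 = 0" and nz: "\<exists>x\<in>{-1..1}. u x \<noteq> 0"
    using ef unfolding is_eigenfunction_def is_solution_def by blast
  from AE_E3[OF ae] obtain N where N: "N \<in> null_sets lborel" and NP0: "\<And>x. x \<in> space lborel - N \<Longrightarrow> x \<in> {-1<..<1} \<longrightarrow>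
        (u' has_vector_derivative (- complex_of_real (lam * (if x \<ge> 0 then 1 else -1) + - q0) * u x)) (at x)"
    by blast
  have NP: "(u' has_vector_derivative (- complex_of_real (lam * (if x \<ge> 0 then 1 else -1) + - q0) * u x)) (at x)"
    if "x \<notin> N" "x \<in> {-1<..<1}" for x
    using NP0[of x] that by simp
  have uc: "continuous_on {-1..1} u"
    using D1 has_vector_derivative_continuous continuous_on_eq_continuous_within by blast
  have R: "(u' has_vector_derivative (-\<alpha>) *\<^sub>R u x) (at x within {0..1})" if x: "x \<in> {0..1}" for x
  proof (rule ac_ftc[where N = N, OF _ _ _ N _ x])
    show "abs_cont_on 0 1 u'" by (rule abs_cont_on_mono[OF ac]) auto
    show "continuous_on {0..1} (\<lambda>x. (-\<alpha>) *\<^sub>R u x)"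
      by (intro continuous_intros continuous_on_subset[OF uc]) auto
    fix y assume y: "y \<in> {0<..<1}" "y \<notin> N"
    have "y \<in> {-1<..<1}" using y by auto
    from NP[OF y(2) this] have "(u' has_vector_derivative (- complex_of_real (lam * (if y \<ge> 0 then 1 else -1) + - q0) * u y)) (at y)" .
    moreover have "- complex_of_real (lam * (if y \<ge> 0 then 1 else -1) + - q0) * u y = (-\<alpha>) *\<^sub>R u y"
      using y unfolding \<alpha>_def by (simp add: scaleR_conv_of_real)
    ultimately show "(u' has_vector_derivative (-\<alpha>) *\<^sub>R u y) (at y)" by simp
  qed simp
  have L: "(u' has_vector_derivative (-\<beta>) *\<^sub>R u x) (at x within {-1..0})" if x: "x \<in> {-1..0}" for x
  proof (rule ac_ftc[where N = N, OF _ _ _ N _ x])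
    show "abs_cont_on (-1) 0 u'" by (rule abs_cont_on_mono[OF ac]) auto
    show "continuous_on {-1..0} (\<lambda>x. (-\<beta>) *\<^sub>R u x)"
      by (intro continuous_intros continuous_on_subset[OF uc]) auto
    fix y assume y: "y \<in> {-1<..<0}" "y \<notin> N"
    have "y \<in> {-1<..<1}" using y by auto
    from NP[OF y(2) this] have "(u' has_vector_derivative (- complex_of_real (lam * (if y \<ge> 0 then 1 else -1) + - q0) * u y)) (at y)" .
    moreover have "- complex_of_real (lam * (if y \<ge> 0 then 1 else -1) + - q0) * u y = (-\<beta>) *\<^sub>R u y"
      using y unfolding \<beta>_def by (simp add: scaleR_conv_of_real)
    ultimately show "(u' has_vector_derivative (-\<beta>) *\<^sub>R u y) (at y)" by simp
  qed simp
  have DR: "(u has_vector_derivative u' x) (at x within {0..1})" if "x \<in> {0..1}" for x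
    using has_vector_derivative_within_subset[OF D1[of x], of "{0..1}"] that by auto
  have DL: "(u has_vector_derivative u' x) (at x within {-1..0})" if "x \<in> {-1..0}" for x
    using has_vector_derivative_within_subset[OF D1[of x], of "{-1..0}"] that by auto
  define A where "A = - u' 1"
  define B where "B = u' (-1)"
  have uR: "u x - Sf \<alpha> (1 - x) *\<^sub>R A = 0" if x: "x \<in> {0..1}" for x
  proof (rule ode_unique[where v = "\<lambda>x. u x - Sf \<alpha> (1 - x) *\<^sub>R A"
        and vd = "\<lambda>x. u' x + Cf \<alpha> (1 - x) *\<^sub>R A" and \<gamma> = \<alpha> and pt = 1, OF _ _ _ _ _ _ x])
    fix t :: real assume t: "t \<in> {0..1}"
    from has_vector_derivative_diff[OF DR[OF t] vec_const_deriv[OF Sf_refl_deriv[where g=\<alpha> and a=1], where A=A]]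
    show "((\<lambda>x. u x - Sf \<alpha> (1 - x) *\<^sub>R A) has_vector_derivative u' t + Cf \<alpha> (1 - t) *\<^sub>R A) (at t within {0..1})"
      by simp
    from has_vector_derivative_add[OF R[OF t] vec_const_deriv[OF Cf_refl_deriv[where g=\<alpha> and a=1], where A=A]]
    show "((\<lambda>x. u' x + Cf \<alpha> (1 - x) *\<^sub>R A) has_vector_derivative (- \<alpha>) *\<^sub>R (u t - Sf \<alpha> (1 - t) *\<^sub>R A)) (at t within {0..1})"
      by (simp add: algebra_simps)
  qed (auto simp: u1 A_def)
  have uL: "u x - Sf \<beta> (x + 1) *\<^sub>R B = 0" if x: "x \<in> {-1..0}" for x
  proof (rule ode_unique[where v = "\<lambda>x. u x - Sf \<beta> (x + 1) *\<^sub>R B"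
        and vd = "\<lambda>x. u' x - Cf \<beta> (x + 1) *\<^sub>R B" and \<gamma> = \<beta> and pt = "-1", OF _ _ _ _ _ _ x])
    fix t :: real assume t: "t \<in> {-1..0}"
    from has_vector_derivative_diff[OF DL[OF t] vec_const_deriv[OF Sf_shift_deriv[where g=\<beta> and a=1], where A=B]]
    show "((\<lambda>x. u x - Sf \<beta> (x + 1) *\<^sub>R B) has_vector_derivative u' t - Cf \<beta> (t + 1) *\<^sub>R B) (at t within {-1..0})"
      by simp
    from has_vector_derivative_diff[OF L[OF t] vec_const_deriv[OF Cf_shift_deriv[where g=\<beta> and a=1], where A=B]]
    show "((\<lambda>x. u' x - Cf \<beta> (x + 1) *\<^sub>R B) has_vector_derivative (- \<beta>) *\<^sub>R (u t - Sf \<beta> (t + 1) *\<^sub>R B)) (at t within {-1..0})"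
      by (simp add: algebra_simps)
  qed (auto simp: um1 B_def)
  have u'R: "u' x + Cf \<alpha> (1 - x) *\<^sub>R A = 0" if x: "x \<in> {0..1}" for x
  proof (rule ode_unique[where v = "\<lambda>x. u' x + Cf \<alpha> (1 - x) *\<^sub>R A"
        and vd = "\<lambda>x. (-\<alpha>) *\<^sub>R (u x - Sf \<alpha> (1 - x) *\<^sub>R A)" and \<gamma> = 0 and pt = 1, OF _ _ _ _ _ _ x])
    fix t :: real assume t: "t \<in> {0..1}"
    from has_vector_derivative_add[OF R[OF t] vec_const_deriv[OF Cf_refl_deriv[where g=\<alpha> and a=1], where A=A]]
    show "((\<lambda>x. u' x + Cf \<alpha> (1 - x) *\<^sub>R A) has_vector_derivative (- \<alpha>) *\<^sub>R (u t - Sf \<alpha> (1 - t) *\<^sub>R A)) (at t within {0..1})"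
      by (simp add: algebra_simps)
    have "((\<lambda>x. (-\<alpha>) *\<^sub>R (u x - Sf \<alpha> (1 - x) *\<^sub>R A)) has_vector_derivative (-\<alpha>) *\<^sub>R 0) (at t within {0..1})"
      by (rule has_vector_derivative_transform[OF t, of _ "\<lambda>x. 0"]) (use uR in auto)
    then show "((\<lambda>x. (-\<alpha>) *\<^sub>R (u x - Sf \<alpha> (1 - x) *\<^sub>R A)) has_vector_derivative (- 0) *\<^sub>R (u' t + Cf \<alpha> (1 - t) *\<^sub>R A)) (at t within {0..1})"
      by simp
  qed (auto simp: u1 A_def)
  have u'L: "u' x - Cf \<beta> (x + 1) *\<^sub>R B = 0" if x: "x \<in> {-1..0}" for x
  proof (rule ode_unique[where v = "\<lambda>x. u' x - Cf \<beta> (x + 1) *\<^sub>R B"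
        and vd = "\<lambda>x. (-\<beta>) *\<^sub>R (u x - Sf \<beta> (x + 1) *\<^sub>R B)" and \<gamma> = 0 and pt = "-1", OF _ _ _ _ _ _ x])
    fix t :: real assume t: "t \<in> {-1..0}"
    from has_vector_derivative_diff[OF L[OF t] vec_const_deriv[OF Cf_shift_deriv[where g=\<beta> and a=1], where A=B]]
    show "((\<lambda>x. u' x - Cf \<beta> (x + 1) *\<^sub>R B) has_vector_derivative (- \<beta>) *\<^sub>R (u t - Sf \<beta> (t + 1) *\<^sub>R B)) (at t within {-1..0})"
      by (simp add: algebra_simps)
    have "((\<lambda>x. (-\<beta>) *\<^sub>R (u x - Sf \<beta> (x + 1) *\<^sub>R B)) has_vector_derivative (-\<beta>) *\<^sub>R 0) (at t within {-1..0})"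
      by (rule has_vector_derivative_transform[OF t, of _ "\<lambda>x. 0"]) (use uL in auto)
    then show "((\<lambda>x. (-\<beta>) *\<^sub>R (u x - Sf \<beta> (x + 1) *\<^sub>R B)) has_vector_derivative (- 0) *\<^sub>R (u' t - Cf \<beta> (t + 1) *\<^sub>R B)) (at t within {-1..0})"
      by simp
  qed (auto simp: um1 B_def)
  define a where "a = Sf \<alpha> 1"
  define c where "c = Cf \<alpha> 1"
  define b where "b = Sf \<beta> 1"
  define d where "d = Cf \<beta> 1"
  have m1: "b *\<^sub>R B = a *\<^sub>R A" using uR[of 0] uL[of 0] unfolding a_def b_def by simp
  have m2: "d *\<^sub>R B = - (c *\<^sub>R A)" using u'R[of 0] u'L[of 0] unfolding c_def d_def
    by (simp add: eq_neg_iff_add_eq_0 algebra_simps)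
  have enb: "d\<^sup>2 + \<beta> * b\<^sup>2 = 1" unfolding b_def d_def by (rule energy)
  define nA where "nA = (cmod A)\<^sup>2"
  define nB where "nB = (cmod B)\<^sup>2"
  have Anz: "A \<noteq> 0"
  proof
    assume A0: "A = 0"
    then have "b *\<^sub>R B = 0" "d *\<^sub>R B = 0" using m1 m2 by auto
    moreover have "b \<noteq> 0 \<or> d \<noteq> 0" using enb by auto
    ultimately have B0: "B = 0" by auto
    have "u x = 0" if "x \<in> {-1..1}" for x
    proof (cases "x \<ge> 0")
      case True then show ?thesis using uR[of x] that A0 by auto
    next
      case False then show ?thesis using uL[of x] that B0 by auto
    qed
    with nz show False by blast
  qed
  have nApos: "nA > 0" unfolding nA_def using Anz by simp
  have r1: "b\<^sup>2 * nB = a\<^sup>2 * nA"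
  proof -
    have "(norm (b *\<^sub>R B))\<^sup>2 = (norm (a *\<^sub>R A))\<^sup>2" using m1 by simp
    then show ?thesis unfolding nA_def nB_def by (simp add: power_mult_distrib)
  qed
  have r2: "d\<^sup>2 * nB = c\<^sup>2 * nA"
  proof -
    have "(norm (d *\<^sub>R B))\<^sup>2 = (norm (- (c *\<^sub>R A)))\<^sup>2" using m2 by simp
    then show ?thesis unfolding nA_def nB_def by (simp add: power_mult_distrib)
  qed
  have r3: "(b - d)\<^sup>2 * nB = (a + c)\<^sup>2 * nA"
  proof -
    have "(b - d) *\<^sub>R B = (a + c) *\<^sub>R A" using m1 m2 by (simp add: algebra_simps)
    then have "(norm ((b - d) *\<^sub>R B))\<^sup>2 = (norm ((a + c) *\<^sub>R A))\<^sup>2" by simp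
    then show ?thesis unfolding nA_def nB_def by (simp only: norm_scaleR power_mult_distrib power2_abs)
  qed
  have r4: "b * d * nB = - (a * c * nA)"
    using r1 r2 r3 by (simp add: power2_eq_square algebra_simps)
  have QB: "2 * \<beta> * Qf \<beta> 1 = 1 - b * d" unfolding Qf_def b_def d_def using bpos by simp
  have key: "2 * \<beta> * Qf \<alpha> 1 < \<beta> * a\<^sup>2 + c\<^sup>2 + a * c"
    using key_ineq[OF al bpos ba abp] unfolding a_def c_def .
  have "2 * \<beta> * (nB * Qf \<beta> 1) = nB * (1 - b * d)" by (subst QB[symmetric]) (simp add: algebra_simps)
  also have "\<dots> = nB * (d\<^sup>2 + \<beta> * b\<^sup>2) - b * d * nB" using enb by (simp add: algebra_simps)
  also have "\<dots> = nA * (\<beta> * a\<^sup>2 + c\<^sup>2 + a * c)" using r1 r2 r4 by (simp add: algebra_simps)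
  finally have eqB: "2 * \<beta> * (nB * Qf \<beta> 1) = nA * (\<beta> * a\<^sup>2 + c\<^sup>2 + a * c)" .
  have "2 * \<beta> * (nA * Qf \<alpha> 1) < 2 * \<beta> * (nB * Qf \<beta> 1)"
  proof -
    have "nA * (2 * \<beta> * Qf \<alpha> 1) < nA * (\<beta> * a\<^sup>2 + c\<^sup>2 + a * c)"
      using key nApos by (rule mult_strict_left_mono)
    then show ?thesis unfolding eqB by (simp add: algebra_simps)
  qed
  then have fin: "nA * Qf \<alpha> 1 - nB * Qf \<beta> 1 < 0" using bpos by simp
  let ?f = "\<lambda>x::real. (if x \<ge> 0 then 1 else -1) * (cmod (u x))\<^sup>2"
  have I1: "(?f has_integral (nA * Qf \<alpha> 1)) {0..1}"
  proof -
    have "((\<lambda>x. nA * (Sf \<alpha> (1 - x))\<^sup>2) has_integral ((\<lambda>x. - nA * Qf \<alpha> (1 - x)) 1 - (\<lambda>x. - nA * Qf \<alpha> (1 - x)) 0)) {0..1}"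
    proof (rule fundamental_theorem_of_calculus)
      fix x :: real assume "x \<in> {0..1}"
      have "((\<lambda>x. - nA * Qf \<alpha> (1 - x)) has_real_derivative - nA * (- (Sf \<alpha> (1 - x))\<^sup>2)) (at x within {0..1})"
        by (intro DERIV_cmult Qf_refl_deriv)
      then show "((\<lambda>x. - nA * Qf \<alpha> (1 - x)) has_vector_derivative nA * (Sf \<alpha> (1 - x))\<^sup>2) (at x within {0..1})"
        unfolding has_real_derivative_iff_has_vector_derivative by simp
    qed simp
    then have I1a: "((\<lambda>x. nA * (Sf \<alpha> (1 - x))\<^sup>2) has_integral (nA * Qf \<alpha> 1)) {0..1}" by simp
    show ?thesis
    proof (rule has_integral_spike_finite[OF finite.emptyI _ I1a])
      fix x :: real assume x: "x \<in> {0..1} - {}"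
      then have "u x = Sf \<alpha> (1 - x) *\<^sub>R A" using uR[of x] by simp
      then show "?f x = nA * (Sf \<alpha> (1 - x))\<^sup>2" using x unfolding nA_def by (simp add: power_mult_distrib)
    qed
  qed
  have I2: "(?f has_integral (- nB * Qf \<beta> 1)) {-1..0}"
  proof -
    have "((\<lambda>x. - nB * (Sf \<beta> (x + 1))\<^sup>2) has_integral ((\<lambda>x. - nB * Qf \<beta> (x + 1)) 0 - (\<lambda>x. - nB * Qf \<beta> (x + 1)) (-1))) {-1..0}"
    proof (rule fundamental_theorem_of_calculus)
      fix x :: real assume "x \<in> {-1..0}"
      have "((\<lambda>x. - nB * Qf \<beta> (x + 1)) has_real_derivative - nB * (Sf \<beta> (x + 1))\<^sup>2) (at x within {-1..0})"
        by (intro DERIV_cmult Qf_shift_deriv)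
      then show "((\<lambda>x. - nB * Qf \<beta> (x + 1)) has_vector_derivative - nB * (Sf \<beta> (x + 1))\<^sup>2) (at x within {-1..0})"
        unfolding has_real_derivative_iff_has_vector_derivative by simp
    qed simp
    then have I2a: "((\<lambda>x. - nB * (Sf \<beta> (x + 1))\<^sup>2) has_integral (- nB * Qf \<beta> 1)) {-1..0}" by simp
    show ?thesis
    proof (rule has_integral_spike_finite[of "{0}", OF _ _ I2a])
      fix x :: real assume x: "x \<in> {-1..0} - {0}"
      then have "u x = Sf \<beta> (x + 1) *\<^sub>R B" using uL[of x] by simp
      then show "?f x = - nB * (Sf \<beta> (x + 1))\<^sup>2" using x unfolding nB_def by (simp add: power_mult_distrib)
    qed simp
  qed
  have "(?f has_integral (- nB * Qf \<beta> 1 + nA * Qf \<alpha> 1)) {-1..1}"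
    by (rule Henstock_Kurzweil_Integration.has_integral_combine[OF _ _ I2 I1]) auto
  then have "integral {-1..1} ?f = - nB * Qf \<beta> 1 + nA * Qf \<alpha> 1" by (rule integral_unique)
  then show ?thesis using fin by simp
qed


theorem mainTheorem5:
  fixes q0 :: real
  assumes "q0 < - (pi\<^sup>2 / 4)"
  shows "ereal (- \<bar>q0\<bar> + pi\<^sup>2 / 4)
           \<le> richardson_minus (-1) 1 (\<lambda>x. if x \<ge> 0 then 1 else -1) (\<lambda>x. - q0)"
proof -
  have pi2: "pi\<^sup>2 > 0" by simp
  have q0neg: "q0 < 0" using assms pi2 by linarith
  have eq: "- \<bar>q0\<bar> + pi\<^sup>2 / 4 = q0 + pi\<^sup>2 / 4" using q0neg by simp
  let ?S = "{\<rho>::real. \<forall>lam u. is_eigenvalue (-1) 1 (\<lambda>x. if x \<ge> 0 then 1 else -1) (\<lambda>x. - q0) lam \<and> lam < \<rho>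
      \<and> is_eigenfunction (-1) 1 (\<lambda>x. if x \<ge> 0 then 1 else -1) (\<lambda>x. - q0) lam u
        \<longrightarrow> integral {-1..1} (\<lambda>x. (if x \<ge> 0 then 1 else -1) * (cmod (u x))\<^sup>2) < 0}"
  have "- \<bar>q0\<bar> + pi\<^sup>2 / 4 \<in> ?S" using eigen_neg[OF assms] eq by auto
  then have "ereal (- \<bar>q0\<bar> + pi\<^sup>2 / 4) \<in> ereal ` ?S" by blast
  then show ?thesis unfolding richardson_minus_def by (rule Sup_upper)
qed

end
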